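(* Assume the equation $\partial_tv+A(Av+l(t)v)=0$ satisfies the strong cone condition. Then there exist $C,\gamma>0$ such that for every $T>0$ and every solution $v(t)$, $t\in[0,T]$: (1) if $v(0)\in K^+$ then $v(t)\in K^+$ for all $t\in[0,T]$; (2) if $v(T)\notin K^+$ then $\|v(t)\|_{H^{-1}}\le Ce^{-\gamma t}\|v(0)\|_{H^{-1}}$ for all $t\in[0,T]$, where $C,\gamma$ are independent of $v$ and $T$.
   Context: Let $H$ be a real separable Hilbert space with inner product $(\cdot,\cdot)$ and norm $\|\cdot\|_H$, and let $A:D(A)\to H$ be a linear self-adjoint positive operator with compact inverse, with orthonormal eigenbasis $\{e_n\}$, $Ae_n=\lambda_ne_n$, $0<\lambda_1\le\lambda_2\le\dots\to\infty$. For $s\ge0$, $H^s=D(A^{s/2})$ with $\|u\|_{H^s}^2=\sum_n\lambda_n^s|(u,e_n)|^2$; for $s<0$, the completion of $H$. For fixed $N$: $P_N$ the orthoprojector onto $\mathrm{span}\{e_1,\dots,e_N\}$, $Q_N=\mathrm{Id}-P_N$. $V(\xi)=\|Q_N\xi\|^2_{H^{-1}}-\|P_N\xi\|^2_{H^{-1}}$, $K^+=\{\xi\in H^{-1}:V(\xi)\le0\}$. $l\in L^\infty(\mathbb{R},\mathcal L(H,H))$ with $\|l(t)\|_{\mathcal L(H,H)}\le L$. Strong cone condition for $\partial_tv+A(Av+l(t)v)=0$: there exist $\mu>0$ and $\alpha:\mathbb{R}\to\mathbb{R}$ with $0<\alpha_-\le\alpha(t)\le\alpha_+$ such that every solution $v(t)$,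 $t\in[S,T]$, satisfies $\frac{d}{dt}V(v(t))+\alpha(t)V(v(t))\le-\mu\|v(t)\|_H^2$ for all $t\in[S,T]$. *)

theory Defs
  imports "HOL-Analysis.Analysis"
begin

text \<open>Coordinates with respect to the orthonormal eigenbasis e_0, e_1, ... of A
  (0-indexed), eigenvalues lam n, i.e. A e_n = lam n e_n.  An element u of H^s is
  represented by its coefficient sequence u n = (u, e_n).\<close>

definition eigenvalues :: "(nat \<Rightarrow> real) \<Rightarrow> bool" where
  "eigenvalues lam \<longleftrightarrow> 0 < lam 0 \<and> mono lam \<and> filterlim lam at_top sequentially"

definition in_H :: "(nat \<Rightarrow> real) \<Rightarrow> real \<Rightarrow> (nat \<Rightarrow> real) \<Rightarrow> bool" where
  "in_H lam s u \<longleftrightarrow> summable (\<lambda>n. lam n powr s * (u n)\<^sup>2)"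

definition Hnorm :: "(nat \<Rightarrow> real) \<Rightarrow> real \<Rightarrow> (nat \<Rightarrow> real) \<Rightarrow> real" where
  "Hnorm lam s u = sqrt (\<Sum>n. lam n powr s * (u n)\<^sup>2)"

text \<open>V(xi) = |Q_N xi|^2_{H^{-1}} - |P_N xi|^2_{H^{-1}}, P_N = projection on e_0..e_{N-1}.\<close>
definition Vfun :: "(nat \<Rightarrow> real) \<Rightarrow> nat \<Rightarrow> (nat \<Rightarrow> real) \<Rightarrow> real" where
  "Vfun lam N u = (\<Sum>n. (if n < N then -1 else 1) * lam n powr (-1) * (u n)\<^sup>2)"

definition Kplus :: "(nat \<Rightarrow> real) \<Rightarrow> nat \<Rightarrow> (nat \<Rightarrow> real) set" where
  "Kplus lam N = {u. in_H lam (-1) u \<and> Vfun lam N u \<le> 0}"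

definition bounded_op_family ::
  "(nat \<Rightarrow> real) \<Rightarrow> (real \<Rightarrow> (nat \<Rightarrow> real) \<Rightarrow> (nat \<Rightarrow> real)) \<Rightarrow> real \<Rightarrow> bool" where
  "bounded_op_family lam l L \<longleftrightarrow>
     (\<forall>t u. in_H lam 0 u \<longrightarrow> in_H lam 0 (l t u) \<and> Hnorm lam 0 (l t u) \<le> L * Hnorm lam 0 u) \<and>
     (\<forall>t u w a b. in_H lam 0 u \<and> in_H lam 0 w \<longrightarrow>
        l t (\<lambda>n. a * u n + b * w n) = (\<lambda>n. a * l t u n + b * l t w n)) \<and>
     (\<forall>u n. in_H lam 0 u \<longrightarrow> (\<lambda>t. l t u n) \<in> borel_measurable lborel)"

text \<open>(Energy) solution of  d/dt v + A(A v + l(t) v) = 0  on [S,T]: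
  v in C([S,T];H^{-1}) \<inter> L^2(S,T;H^1), and the equation holds in integrated form
  coordinatewise: (v(t),e_n) - (v(S),e_n) = int_S^t (-lam_n^2 (v,e_n) - lam_n (l v, e_n)).\<close>
definition solution ::
  "(nat \<Rightarrow> real) \<Rightarrow> (real \<Rightarrow> (nat \<Rightarrow> real) \<Rightarrow> (nat \<Rightarrow> real)) \<Rightarrow> real \<Rightarrow> real \<Rightarrow>
   (real \<Rightarrow> nat \<Rightarrow> real) \<Rightarrow> bool" where
  "solution lam l S T v \<longleftrightarrow>
     S \<le> T \<and>
     (\<forall>t\<in>{S..T}. in_H lam (-1) (v t)) \<and>
     (\<forall>t\<in>{S..T}. ((\<lambda>s. Hnorm lam (-1) (\<lambda>n. v s n - v t n)) \<longlongrightarrow> 0) (at t within {S..T})) \<and>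
     (AE t in lebesgue. t \<in> {S..T} \<longrightarrow> in_H lam 1 (v t)) \<and>
     (\<lambda>t. (Hnorm lam 1 (v t))\<^sup>2) integrable_on {S..T} \<and>
     (\<forall>n. \<forall>t\<in>{S..T}.
        ((\<lambda>r. - (lam n)\<^sup>2 * v r n - lam n * l r (v r) n) has_integral (v t n - v S n)) {S..t})"

definition strong_cone_condition ::
  "(nat \<Rightarrow> real) \<Rightarrow> nat \<Rightarrow> (real \<Rightarrow> (nat \<Rightarrow> real) \<Rightarrow> (nat \<Rightarrow> real)) \<Rightarrow> bool" where
  "strong_cone_condition lam N l \<longleftrightarrow>
     (\<exists>\<mu>>0. \<exists>\<alpha> am ap. 0 < am \<and> (\<forall>t. am \<le> \<alpha> t \<and> \<alpha> t \<le> ap) \<and>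
       (\<forall>S T v. solution lam l S T v \<longrightarrow>
          (AE t in lebesgue. t \<in> {S..T} \<longrightarrow>
             (\<exists>D. ((\<lambda>s. Vfun lam N (v s)) has_real_derivative D) (at t within {S..T}) \<and>
                  D + \<alpha> t * Vfun lam N (v t) \<le> - \<mu> * (Hnorm lam 0 (v t))\<^sup>2))))"

end

theory Submission
  imports Defs "HOL-Analysis.Analysis"
begin

lemma defect_zero:
  fixes D M :: "real \<Rightarrow> real"
  assumes ab: "a \<le> b"
    and mono: "\<And>x y. a \<le> x \<Longrightarrow> x \<le> y \<Longrightarrow> y \<le> b \<Longrightarrow> M x \<le> M y"
    and loc: "\<And>e. e > 0 \<Longrightarrow> \<exists>d>0. \<forall>x y. a \<le> x \<longrightarrow> x \<le> y \<longrightarrow> y \<le> b \<longrightarrow> y - x < d \<longrightarrow> \<bar>D y - D x\<bar> \<le> e * (M y - M x)"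
  shows "D b = D a"
proof -
  have key: "\<bar>D b - D a\<bar> \<le> e * (M b - M a)" if e: "e > 0" for e
  proof -
    obtain d where d: "d > 0" and hd: "\<And>x y. a \<le> x \<Longrightarrow> x \<le> y \<Longrightarrow> y \<le> b \<Longrightarrow> y - x < d \<Longrightarrow> \<bar>D y - D x\<bar> \<le> e * (M y - M x)"
      using loc[OF e] by blast
    have ind: "\<forall>x y. a \<le> x \<longrightarrow> x \<le> y \<longrightarrow> y \<le> b \<longrightarrow> y - x < real n * (d/2) \<longrightarrow> \<bar>D y - D x\<bar> \<le> e * (M y - M x)" for n
    proof (induction n)
      case 0 then show ?case by simp
    next
      case (Suc n)
      show ?case
      proof (intro allI impI)
        fix x y assume xy: "a \<le> x" "x \<le> y" "y \<le> b" "y - x < real (Suc n) * (d/2)"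
        show "\<bar>D y - D x\<bar> \<le> e * (M y - M x)"
        proof (cases "y - x < d")
          case True then show ?thesis using hd xy by blast
        next
          case False
          define c where "c = x + d/2"
          have c: "x \<le> c" "c \<le> y" "c - x < d" "y - c < real n * (d/2)"
            using False d xy(4) by (auto simp: c_def algebra_simps)
          have 1: "\<bar>D c - D x\<bar> \<le> e * (M c - M x)" using hd[of x c] xy c by auto
          have 2: "\<bar>D y - D c\<bar> \<le> e * (M y - M c)" using Suc.IH xy c by auto
          have "\<bar>D y - D x\<bar> \<le> \<bar>D c - D x\<bar> + \<bar>D y - D c\<bar>" by linarith
          also have "\<dots> \<le> e * (M y - M x)" using 1 2 by (simp add: algebra_simps)
          finally show ?thesis .
        qed
      qed
    qed
    obtain n where n: "(b - a) / (d/2) < real n" using reals_Archimedean2 by blast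
    have "b - a < real n * (d/2)" using n d by (simp add: field_simps)
    then show ?thesis using ind[of n] ab by auto
  qed
  have M0: "M b - M a \<ge> 0" using mono[of a b] ab by auto
  show ?thesis
  proof (rule ccontr)
    assume ne: "D b \<noteq> D a"
    then have pos: "\<bar>D b - D a\<bar> > 0" by simp
    define e where "e = \<bar>D b - D a\<bar> / (2 * (M b - M a + 1))"
    have e: "e > 0" using pos M0 by (simp add: e_def)
    have "\<bar>D b - D a\<bar> \<le> e * (M b - M a)" using key[OF e] .
    also have "\<dots> = \<bar>D b - D a\<bar> * ((M b - M a) / (2 * (M b - M a + 1)))"
      by (simp add: e_def)
    also have "\<dots> < \<bar>D b - D a\<bar> * 1"
      using pos M0 by (intro mult_strict_left_mono) (auto simp: field_simps)
    finally show False by simp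
  qed
qed

lemma sq_has_integral:
  fixes F f :: "real \<Rightarrow> real"
  assumes fa: "f absolutely_integrable_on {a..b}"
    and FI: "\<And>t. t \<in> {a..b} \<Longrightarrow> (f has_integral (F t - F a)) {a..t}"
    and t: "t \<in> {a..b}"
  shows "((\<lambda>r. 2 * F r * f r) has_integral (F t ^ 2 - F a ^ 2)) {a..t}"
proof -
  have fi: "f integrable_on {a..b}" using fa absolutely_integrable_on_def by blast
  have fsub: "f integrable_on {x..y}" if "a \<le> x" "y \<le> b" for x y
    using integrable_on_subinterval[OF fi] that by auto
  have Feq: "F x = F a + integral {a..x} f" if "x \<in> {a..b}" for x
    using FI[OF that] by (simp add: integral_unique)
  have Fcont: "continuous_on {a..b} F"
  proof -
    have "continuous_on {a..b} (\<lambda>x. F a + integral {a..x} f)"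
      by (intro continuous_intros indefinite_integral_continuous_1 fi)
    then show ?thesis using Feq by (metis (no_types, lifting) continuous_on_cong)
  qed
  have prod: "(\<lambda>r. F r * f r) absolutely_integrable_on {a..b}"
  proof (rule absolutely_integrable_bounded_measurable_product_real)
    show "F \<in> borel_measurable (lebesgue_on {a..b})"
      by (rule continuous_imp_measurable_on_sets_lebesgue[OF Fcont]) simp
    show "bounded (F ` {a..b})"
      by (intro compact_imp_bounded compact_continuous_image Fcont) simp
  qed (use fa in auto)
  define G where "G r = 2 * F r * f r" for r
  have Gi: "G integrable_on {a..b}"
  proof -
    have "(\<lambda>r. 2 * (F r * f r)) integrable_on {a..b}"
      using prod absolutely_integrable_on_def integrable_on_mult_right by blast
    then show ?thesis unfolding G_def by (simp add: mult.assoc)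
  qed
  have Gsub: "G integrable_on {x..y}" if "a \<le> x" "y \<le> b" for x y
    using integrable_on_subinterval[OF Gi] that by auto
  have afi: "(\<lambda>r. \<bar>f r\<bar>) integrable_on {a..b}" using fa unfolding absolutely_integrable_on_def by (simp add: real_norm_def)
  have afsub: "(\<lambda>r. \<bar>f r\<bar>) integrable_on {x..y}" if "a \<le> x" "y \<le> b" for x y
    using integrable_on_subinterval[OF afi] that by auto
  define D where "D x = F x ^ 2 - integral {a..x} G" for x
  define M where "M x = integral {a..x} (\<lambda>r. \<bar>f r\<bar>)" for x
  have tb: "a \<le> t" "t \<le> b" using t by auto
  have comb: "integral {a..y} h = integral {a..x} h + integral {x..y} h"
    if "h integrable_on {a..y}" "a \<le> x" "x \<le> y" for h :: "real \<Rightarrow> real" and x y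
    using Henstock_Kurzweil_Integration.integral_combine[where a=a and c=x and b=y and f=h] that by (simp add: algebra_simps)
  have Mdiff: "M y - M x = integral {x..y} (\<lambda>r. \<bar>f r\<bar>)" if "a \<le> x" "x \<le> y" "y \<le> b" for x y
    using comb[OF afsub[of a y] that(1,2)] that by (simp add: M_def)
  have "D t = D a"
  proof (rule defect_zero[OF tb(1)])
    fix x y assume xy: "a \<le> x" "x \<le> y" "y \<le> t"
    show "M x \<le> M y"
      using Mdiff[of x y] xy tb integral_nonneg[OF afsub[of x y]] by auto
  next
    fix e :: real assume e: "e > 0"
    have uc: "uniformly_continuous_on {a..b} F"
      by (intro compact_uniformly_continuous Fcont) simp
    obtain d where d: "d > 0" and hd: "\<And>x x'. x \<in> {a..b} \<Longrightarrow> x' \<in> {a..b} \<Longrightarrow> dist x' x < d \<Longrightarrow> dist (F x') (F x) < e/4"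
      using uc[unfolded uniformly_continuous_on_def, rule_format, of "e/4"] e by auto
    show "\<exists>d>0. \<forall>x y. a \<le> x \<longrightarrow> x \<le> y \<longrightarrow> y \<le> t \<longrightarrow> y - x < d \<longrightarrow> \<bar>D y - D x\<bar> \<le> e * (M y - M x)"
    proof (intro exI[of _ d] conjI allI impI d)
      fix x y assume xy: "a \<le> x" "x \<le> y" "y \<le> t" "y - x < d"
      have yb: "y \<le> b" using xy tb by auto
      have Fd: "F y - F x = integral {x..y} f"
        using Feq[of x] Feq[of y] comb[OF fsub[of a y] xy(1,2)] xy yb by auto
      have "F y ^ 2 - F x ^ 2 = (F y + F x) * (F y - F x)" by (simp add: power2_eq_square algebra_simps)
      also have "\<dots> = integral {x..y} (\<lambda>r. (F y + F x) * f r)"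
        using Fd by simp
      finally have sq: "F y ^ 2 - F x ^ 2 = integral {x..y} (\<lambda>r. (F y + F x) * f r)" .
      have Gxy: "integral {a..y} G - integral {a..x} G = integral {x..y} G"
        using comb[OF Gsub[of a y] xy(1,2)] yb by simp
      have i1: "(\<lambda>r. (F y + F x) * f r) integrable_on {x..y}"
        using fsub[of x y] xy yb by (intro integrable_on_mult_right) auto
      have i2: "G integrable_on {x..y}" using Gsub[of x y] xy yb by auto
      have "D y - D x = integral {x..y} (\<lambda>r. (F y + F x) * f r) - integral {x..y} G"
        using sq Gxy by (simp add: D_def)
      also have "\<dots> = integral {x..y} (\<lambda>r. (F y + F x) * f r - G r)"
        by (rule integral_diff[OF i1 i2, symmetric])
      finally have Dd: "D y - D x = integral {x..y} (\<lambda>r. (F y + F x) * f r - G r)" .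
      have bnd: "norm ((F y + F x) * f r - G r) \<le> e/2 * \<bar>f r\<bar>" if r: "r \<in> {x..y}" for r
      proof -
        have ra: "r \<in> {a..b}" "x \<in> {a..b}" "y \<in> {a..b}" using r xy yb by auto
        have "dist y r < d" "dist x r < d" using r xy by (auto simp: dist_real_def)
        then have "\<bar>F y - F r\<bar> < e/4" "\<bar>F x - F r\<bar> < e/4"
          using hd[OF ra(1) ra(3)] hd[OF ra(1) ra(2)] by (simp_all add: dist_real_def abs_minus_commute)
        then have "\<bar>F y + F x - 2 * F r\<bar> \<le> e/2" by linarith
        then have "\<bar>F y + F x - 2 * F r\<bar> * \<bar>f r\<bar> \<le> e/2 * \<bar>f r\<bar>"
          by (intro mult_right_mono) auto
        moreover have "(F y + F x) * f r - G r = (F y + F x - 2 * F r) * f r"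
          by (simp add: G_def algebra_simps)
        ultimately show ?thesis by (simp add: abs_mult)
      qed
      have i3: "(\<lambda>r. e/2 * \<bar>f r\<bar>) integrable_on {x..y}"
        using afsub[of x y] xy yb by (intro integrable_on_mult_right) auto
      have "\<bar>D y - D x\<bar> = norm (integral {x..y} (\<lambda>r. (F y + F x) * f r - G r))"
        unfolding Dd by simp
      also have "\<dots> \<le> integral {x..y} (\<lambda>r. e/2 * \<bar>f r\<bar>)"
        by (rule integral_norm_bound_integral[OF integrable_diff[OF i1 i2] i3 bnd])
      also have "\<dots> = e/2 * (M y - M x)"
        using Mdiff[of x y] xy yb by simp
      also have "\<dots> \<le> e * (M y - M x)"
      proof -
        have "M y - M x \<ge> 0" using Mdiff[of x y] xy yb integral_nonneg[OF afsub[of x y]] by auto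
        then show ?thesis using e by (intro mult_right_mono) auto
      qed
      finally show "\<bar>D y - D x\<bar> \<le> e * (M y - M x)" .
    qed
  qed
  then have "integral {a..t} G = F t ^ 2 - F a ^ 2" by (simp add: D_def)
  moreover have "G integrable_on {a..t}" using Gsub[of a t] tb by auto
  ultimately show ?thesis
    using integrable_integral[of G "{a..t}"] by (simp add: G_def[abs_def])
qed

lemma deriv_ae_eq:
  fixes W g :: "real \<Rightarrow> real"
  assumes gi: "g integrable_on {a..b}"
    and WI: "\<And>t. t \<in> {a..b} \<Longrightarrow> (g has_integral (W t - W a)) {a..t}"
  obtains Z where "negligible Z"
    "\<And>x D. x \<in> {a<..<b} \<Longrightarrow> x \<notin> Z \<Longrightarrow> (W has_real_derivative D) (at x within {a..b}) \<Longrightarrow> D = g x"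
proof -
  define g0 where "g0 = (\<lambda>r. if r \<in> {a..b} then g r else 0)"
  have g0U: "g0 integrable_on UNIV" unfolding g0_def using gi integrable_restrict_UNIV by blast
  have g0c: "g0 integrable_on cbox c d" for c d :: real
    by (rule integrable_on_subcbox[OF g0U]) auto
  obtain Z where Z: "negligible Z"
    and hZ: "\<And>x e. x \<notin> Z \<Longrightarrow> 0 < e \<Longrightarrow> \<exists>d>0. \<forall>h. 0 < h \<and> h < d \<longrightarrow>
        norm (integral (cbox x (x + h *\<^sub>R One)) g0 /\<^sub>R h ^ DIM(real) - g0 x) < e"
    using integrable_ccontinuous_explicit[of g0] g0c by blast
  show ?thesis
  proof (rule that[OF Z])
    fix x D assume x: "x \<in> {a<..<b}" and xZ: "x \<notin> Z"
      and dW: "(W has_real_derivative D) (at x within {a..b})"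
    have "at x within {a..b} = at x"
      using x by (intro at_within_interior) auto
    then have "DERIV W x :> D" using dW by simp
    then have "((\<lambda>h. (W (x + h) - W x) / h) \<longlongrightarrow> D) (at 0)"
      by (simp add: DERIV_def)
    then have lim1: "((\<lambda>h. (W (x + h) - W x) / h) \<longlongrightarrow> D) (at_right 0)"
      by (rule filterlim_at_split[THEN iffD1, THEN conjunct2])
    have ginc: "integral {x..x+h} g0 = W (x + h) - W x" if h: "0 < h" "h < b - x" for h
    proof -
      have "integral {x..x+h} g0 = integral {x..x+h} g"
        using x h by (intro integral_cong) (auto simp: g0_def)
      also have "\<dots> = W (x + h) - W x"
      proof -
        have i1: "integral {a..x+h} g = W (x+h) - W a" using WI[of "x+h"] x h by (simp add: integral_unique)
        have i2: "integral {a..x} g = W x - W a" using WI[of x] x by (simp add: integral_unique)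
        have gs: "g integrable_on {a..x+h}"
          using integrable_on_subinterval[OF gi, of a "x+h"] x h by auto
        have "integral {a..x} g + integral {x..x+h} g = integral {a..x+h} g"
          using Henstock_Kurzweil_Integration.integral_combine[where a=a and c=x and b="x+h" and f=g] gs x h by auto
        then show ?thesis using i1 i2 by simp
      qed
      finally show ?thesis .
    qed
    have lim2: "((\<lambda>h. (W (x + h) - W x) / h) \<longlongrightarrow> g x) (at_right 0)"
    proof (rule tendstoI)
      fix e :: real assume e: "e > 0"
      obtain d where d: "d > 0" and hd: "\<And>h. 0 < h \<Longrightarrow> h < d \<Longrightarrow>
          norm (integral (cbox x (x + h *\<^sub>R One)) g0 /\<^sub>R h ^ DIM(real) - g0 x) < e"
        using hZ[OF xZ e] by blast
      show "\<forall>\<^sub>F h in at_right 0. dist ((W (x + h) - W x) / h) (g x) < e"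
        unfolding eventually_at_right_field
      proof (intro exI[of _ "min d (b - x)"] conjI allI impI)
        show "0 < min d (b - x)" using d x by auto
        fix h :: real assume h: "0 < h" "h < min d (b - x)"
        have "norm (integral (cbox x (x + h *\<^sub>R One)) g0 /\<^sub>R h ^ DIM(real) - g0 x) < e"
          using hd h by auto
        moreover have "g0 x = g x" using x by (simp add: g0_def)
        ultimately show "dist ((W (x + h) - W x) / h) (g x) < e"
          using ginc[of h] h by (simp add: dist_real_def divide_inverse mult.commute)
      qed
    qed
    show "D = g x"
      using tendsto_unique[OF trivial_limit_at_right_real lim1 lim2] .
  qed
qed

definition Qf :: "(nat \<Rightarrow> real) \<Rightarrow> (nat \<Rightarrow> real) \<Rightarrow> (nat \<Rightarrow> real) \<Rightarrow> real" where
  "Qf lam c u = (\<Sum>n. c n * lam n powr (-1) * (u n)\<^sup>2)"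

context
  fixes lam :: "nat \<Rightarrow> real"
  assumes ev: "eigenvalues lam"
begin

lemma lam0: "0 < lam 0" using ev by (simp add: eigenvalues_def)

lemma lam_ge: "lam 0 \<le> lam n" using ev by (simp add: eigenvalues_def mono_def)

lemma lam_pos: "0 < lam n" using lam0 lam_ge[of n] by linarith

lemma lam_abs [simp]: "\<bar>lam n\<bar> = lam n" using lam_pos[of n] by simp

lemma lam_nz [simp]: "lam n = 0 \<longleftrightarrow> False" using lam_pos[of n] by simp

lemma powr_simps [simp]: "lam n powr 1 = lam n" "lam n powr 0 = 1" "lam n powr (-1) = 1 / lam n"
  using lam_pos[of n] by (auto simp: powr_neg_one)

lemma inH1_summable: "in_H lam 1 u \<Longrightarrow> summable (\<lambda>n. lam n * (u n)\<^sup>2)"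
  by (simp add: in_H_def)

lemma inH0_summable: "in_H lam 0 u \<Longrightarrow> summable (\<lambda>n. (u n)\<^sup>2)"
  by (simp add: in_H_def)

lemma inHm1_summable: "in_H lam (-1) u \<Longrightarrow> summable (\<lambda>n. (u n)\<^sup>2 / lam n)"
  by (simp add: in_H_def)

lemma sq_le_lam: "(u n)\<^sup>2 \<le> lam n * (u n)\<^sup>2 / lam 0"
proof -
  have "lam 0 * (u n)\<^sup>2 \<le> lam n * (u n)\<^sup>2" using lam_ge[of n] by (intro mult_right_mono) auto
  then show ?thesis using lam0 by (simp add: field_simps)
qed

lemma inH1_imp_inH0: assumes "in_H lam 1 u" shows "in_H lam 0 u"
proof -
  have "summable (\<lambda>n. lam n * (u n)\<^sup>2 / lam 0)"
    using inH1_summable[OF assms] by (rule summable_divide)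
  then have "summable (\<lambda>n. (u n)\<^sup>2)"
    by (rule summable_comparison_test'[where N=0]) (simp add: sq_le_lam)
  then show ?thesis by (simp add: in_H_def)
qed

lemma S0_le: assumes "in_H lam 1 u"
  shows "(\<Sum>n. (u n)\<^sup>2) \<le> (\<Sum>n. lam n * (u n)\<^sup>2) / lam 0"
proof -
  have s1: "summable (\<lambda>n. lam n * (u n)\<^sup>2 / lam 0)"
    using inH1_summable[OF assms] by (rule summable_divide)
  have "(\<Sum>n. (u n)\<^sup>2) \<le> (\<Sum>n. lam n * (u n)\<^sup>2 / lam 0)"
    by (rule suminf_le[OF _ inH0_summable[OF inH1_imp_inH0[OF assms]] s1]) (simp add: sq_le_lam)
  also have "\<dots> = (\<Sum>n. lam n * (u n)\<^sup>2) / lam 0"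
    using suminf_divide[OF inH1_summable[OF assms], of "lam 0"] by simp
  finally show ?thesis .
qed

lemma Hnorm_sq: "in_H lam s u \<Longrightarrow> (Hnorm lam s u)\<^sup>2 = (\<Sum>n. lam n powr s * (u n)\<^sup>2)"
proof -
  assume a: "in_H lam s u"
  have "0 \<le> (\<Sum>n. lam n powr s * (u n)\<^sup>2)"
    using a unfolding in_H_def by (rule suminf_nonneg) (simp add: mult_nonneg_nonneg)
  then show ?thesis unfolding Hnorm_def by simp
qed

lemma Hnorm_nonneg: "in_H lam s u \<Longrightarrow> Hnorm lam s u \<ge> 0"
  unfolding Hnorm_def in_H_def by (simp add: suminf_nonneg mult_nonneg_nonneg)

lemma term_le: fixes u :: "nat \<Rightarrow> real" shows "summable (\<lambda>n. (u n)\<^sup>2) \<Longrightarrow> (u k)\<^sup>2 \<le> (\<Sum>n. (u n)\<^sup>2)"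
  using sum_le_suminf[of "\<lambda>n. (u n)\<^sup>2" "{k}"] by auto

lemma phi_bounds:
  fixes u w c :: "nat \<Rightarrow> real" and L :: real
  assumes u: "in_H lam 1 u" and w: "in_H lam 0 w" and wL: "Hnorm lam 0 w \<le> L * Hnorm lam 0 u"
    and c: "\<And>n. \<bar>c n\<bar> \<le> 1"
  defines "\<phi> \<equiv> \<lambda>n. c n * (-2 * lam n * (u n)\<^sup>2 - 2 * u n * w n)"
  shows "summable \<phi>"
    and "\<And>K. \<bar>\<Sum>n<K. \<phi> n\<bar> \<le> (2 + (1 + L\<^sup>2) / lam 0) * (Hnorm lam 1 u)\<^sup>2"
    and "(\<Sum>n. (-2 * lam n * (u n)\<^sup>2 - 2 * u n * w n)) \<le> (1 + L\<^sup>2) * (Hnorm lam 0 u)\<^sup>2"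
    and "(\<Sum>n. w n ^ 2) \<le> L\<^sup>2 * (\<Sum>n. (u n)\<^sup>2)"
proof -
  have u0: "in_H lam 0 u" by (rule inH1_imp_inH0[OF u])
  have s1: "summable (\<lambda>n. lam n * (u n)\<^sup>2)" using inH1_summable[OF u] .
  have s0: "summable (\<lambda>n. (u n)\<^sup>2)" using inH0_summable[OF u0] .
  have sw: "summable (\<lambda>n. (w n)\<^sup>2)" using inH0_summable[OF w] .
  have H1: "(Hnorm lam 1 u)\<^sup>2 = (\<Sum>n. lam n * (u n)\<^sup>2)" using Hnorm_sq[OF u] by simp
  have H0: "(Hnorm lam 0 u)\<^sup>2 = (\<Sum>n. (u n)\<^sup>2)" using Hnorm_sq[OF u0] by simp
  have Hw: "(Hnorm lam 0 w)\<^sup>2 = (\<Sum>n. (w n)\<^sup>2)" using Hnorm_sq[OF w] by simp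
  have "(Hnorm lam 0 w)\<^sup>2 \<le> (L * Hnorm lam 0 u)\<^sup>2"
    using wL Hnorm_nonneg[OF w] by (intro power_mono) auto
  then show wle: "(\<Sum>n. w n ^ 2) \<le> L\<^sup>2 * (\<Sum>n. (u n)\<^sup>2)"
    using Hw H0 by (simp add: power_mult_distrib)
  define b where "b n = 2 * lam n * (u n)\<^sup>2 + ((u n)\<^sup>2 + (w n)\<^sup>2)" for n
  have sb: "summable b" unfolding b_def
    by (intro summable_add summable_mult s1 s0 sw) (use s1 summable_mult[OF s1, of 2] in \<open>simp add: mult.assoc\<close>)
  have uw: "\<bar>2 * u n * w n\<bar> \<le> (u n)\<^sup>2 + (w n)\<^sup>2" for n
  proof -
    have "0 \<le> (\<bar>u n\<bar> - \<bar>w n\<bar>)\<^sup>2" by simp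
    then show ?thesis by (simp add: power2_eq_square algebra_simps abs_mult)
  qed
  have phib: "\<bar>\<phi> n\<bar> \<le> b n" for n
  proof -
    have "\<bar>\<phi> n\<bar> = \<bar>c n\<bar> * \<bar>-2 * lam n * (u n)\<^sup>2 - 2 * u n * w n\<bar>" by (simp add: \<phi>_def abs_mult)
    also have "\<dots> \<le> 1 * \<bar>-2 * lam n * (u n)\<^sup>2 - 2 * u n * w n\<bar>" using c[of n] by (intro mult_right_mono) auto
    also have "\<dots> \<le> b n"
    proof -
      have ab: "\<bar>-2 * lam n * (u n)\<^sup>2\<bar> = 2 * lam n * (u n)\<^sup>2" using lam_pos[of n] by (simp add: abs_mult)
      have "\<bar>-2 * lam n * (u n)\<^sup>2 - 2 * u n * w n\<bar> \<le> \<bar>-2 * lam n * (u n)\<^sup>2\<bar> + \<bar>2 * u n * w n\<bar>"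
        by (rule abs_triangle_ineq4)
      then show ?thesis using uw[of n] ab unfolding b_def by (smt (verit))
    qed
    finally show ?thesis by simp
  qed
  show "summable \<phi>"
    by (rule summable_comparison_test'[OF sb, where N=0]) (use phib in simp)
  have bsum: "(\<Sum>n. b n) = 2 * (\<Sum>n. lam n * (u n)\<^sup>2) + ((\<Sum>n. (u n)\<^sup>2) + (\<Sum>n. (w n)\<^sup>2))"
  proof -
    have "(\<Sum>n. b n) = (\<Sum>n. 2 * (lam n * (u n)\<^sup>2)) + (\<Sum>n. (u n)\<^sup>2 + (w n)\<^sup>2)"
      unfolding b_def using summable_mult[OF s1, of 2] summable_add[OF s0 sw]
      by (subst suminf_add) (auto simp: mult.assoc)
    also have "\<dots> = 2 * (\<Sum>n. lam n * (u n)\<^sup>2) + ((\<Sum>n. (u n)\<^sup>2) + (\<Sum>n. (w n)\<^sup>2))"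
      using suminf_mult[OF s1, of 2] suminf_add[OF s0 sw] by simp
    finally show ?thesis .
  qed
  have S0: "(\<Sum>n. (u n)\<^sup>2) \<le> (\<Sum>n. lam n * (u n)\<^sup>2) / lam 0" by (rule S0_le[OF u])
  have S1nn: "0 \<le> (\<Sum>n. lam n * (u n)\<^sup>2)" using s1 by (rule suminf_nonneg) (simp add: less_imp_le[OF lam_pos])
  show "\<bar>\<Sum>n<K. \<phi> n\<bar> \<le> (2 + (1 + L\<^sup>2) / lam 0) * (Hnorm lam 1 u)\<^sup>2" for K
  proof -
    have "\<bar>\<Sum>n<K. \<phi> n\<bar> \<le> (\<Sum>n<K. \<bar>\<phi> n\<bar>)" by (rule sum_abs)
    also have "\<dots> \<le> (\<Sum>n<K. b n)" by (intro sum_mono phib)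
    also have "\<dots> \<le> (\<Sum>n. b n)"
      by (rule sum_le_suminf[OF sb]) (auto simp: b_def intro!: add_nonneg_nonneg mult_nonneg_nonneg less_imp_le[OF lam_pos])
    also have "\<dots> \<le> 2 * (\<Sum>n. lam n * (u n)\<^sup>2) + (1 + L\<^sup>2) * (\<Sum>n. (u n)\<^sup>2)"
      using bsum wle by (simp add: algebra_simps)
    also have "\<dots> \<le> 2 * (\<Sum>n. lam n * (u n)\<^sup>2) + (1 + L\<^sup>2) * ((\<Sum>n. lam n * (u n)\<^sup>2) / lam 0)"
      using S0 by (intro add_left_mono mult_left_mono) auto
    also have "\<dots> = (2 + (1 + L\<^sup>2) / lam 0) * (Hnorm lam 1 u)\<^sup>2"
      using H1 by (simp add: algebra_simps)
    finally show ?thesis .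
  qed
  show "(\<Sum>n. (-2 * lam n * (u n)\<^sup>2 - 2 * u n * w n)) \<le> (1 + L\<^sup>2) * (Hnorm lam 0 u)\<^sup>2"
  proof -
    have sphi1: "summable (\<lambda>n. -2 * lam n * (u n)\<^sup>2 - 2 * u n * w n)"
      by (rule summable_comparison_test'[where N=0 and g="\<lambda>n. 2 * lam n * (u n)\<^sup>2 + ((u n)\<^sup>2 + (w n)\<^sup>2)"])
         (use sb[unfolded b_def] uw lam_pos in \<open>auto simp: abs_mult intro!: abs_triangle_ineq4[THEN order_trans]\<close>)
    have "(\<Sum>n. (-2 * lam n * (u n)\<^sup>2 - 2 * u n * w n)) \<le> (\<Sum>n. (u n)\<^sup>2 + (w n)\<^sup>2)"
    proof (rule suminf_le[OF _ sphi1 summable_add[OF s0 sw]])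
      fix n
      have "0 \<le> lam n * (u n)\<^sup>2" using lam_pos[of n] by simp
      then show "-2 * lam n * (u n)\<^sup>2 - 2 * u n * w n \<le> (u n)\<^sup>2 + (w n)\<^sup>2" using uw[of n] by linarith
    qed
    also have "\<dots> = (\<Sum>n. (u n)\<^sup>2) + (\<Sum>n. (w n)\<^sup>2)" by (rule suminf_add[OF s0 sw, symmetric])
    also have "\<dots> \<le> (1 + L\<^sup>2) * (Hnorm lam 0 u)\<^sup>2" using wle H0 by (simp add: algebra_simps)
    finally show ?thesis .
  qed
qed


lemma f_bound:
  fixes u w :: "nat \<Rightarrow> real"
  assumes u: "in_H lam 1 u" and w: "in_H lam 0 w" and wL: "Hnorm lam 0 w \<le> L * Hnorm lam 0 u"
  shows "\<bar>- (lam n)\<^sup>2 * u n - lam n * w n\<bar> \<le> ((lam n)\<^sup>2 + lam n) * (1 + (1 + L\<^sup>2) / lam 0 * (Hnorm lam 1 u)\<^sup>2)"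
proof -
  have u0: "in_H lam 0 u" by (rule inH1_imp_inH0[OF u])
  have wle: "(\<Sum>n. w n ^ 2) \<le> L\<^sup>2 * (\<Sum>n. (u n)\<^sup>2)"
    using phi_bounds(4)[OF u w wL, of "\<lambda>_. 1"] by simp
  have H1: "(Hnorm lam 1 u)\<^sup>2 = (\<Sum>n. lam n * (u n)\<^sup>2)" using Hnorm_sq[OF u] by simp
  have S0: "(\<Sum>n. (u n)\<^sup>2) \<le> (Hnorm lam 1 u)\<^sup>2 / lam 0" using S0_le[OF u] H1 by simp
  have S0nn: "0 \<le> (\<Sum>n. (u n)\<^sup>2)" using inH0_summable[OF u0] by (rule suminf_nonneg) simp
  have ab: "\<bar>x\<bar> \<le> 1 + x\<^sup>2" for x :: real
  proof -
    have "0 \<le> (\<bar>x\<bar> - 1)\<^sup>2" by simp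
    then show ?thesis by (simp add: power2_eq_square algebra_simps)
  qed
  define B where "B = 1 + (1 + L\<^sup>2) / lam 0 * (Hnorm lam 1 u)\<^sup>2"
  have un: "\<bar>u n\<bar> \<le> B"
  proof -
    have "(u n)\<^sup>2 \<le> (\<Sum>n. (u n)\<^sup>2)" by (rule term_le[OF inH0_summable[OF u0]])
    also have "\<dots> \<le> (1 + L\<^sup>2) * (\<Sum>n. (u n)\<^sup>2)" using S0nn by (simp add: algebra_simps)
    also have "\<dots> \<le> (1 + L\<^sup>2) * ((Hnorm lam 1 u)\<^sup>2 / lam 0)"
      using S0 by (intro mult_left_mono) auto
    finally show ?thesis using ab[of "u n"] unfolding B_def by simp
  qed
  have wn: "\<bar>w n\<bar> \<le> B"
  proof -
    have "(w n)\<^sup>2 \<le> (\<Sum>n. (w n)\<^sup>2)" by (rule term_le[OF inH0_summable[OF w]])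
    also have "\<dots> \<le> L\<^sup>2 * (\<Sum>n. (u n)\<^sup>2)" using wle by simp
    also have "\<dots> \<le> (1 + L\<^sup>2) * (\<Sum>n. (u n)\<^sup>2)" using S0nn by (simp add: algebra_simps)
    also have "\<dots> \<le> (1 + L\<^sup>2) * ((Hnorm lam 1 u)\<^sup>2 / lam 0)"
      using S0 by (intro mult_left_mono) auto
    finally show ?thesis using ab[of "w n"] unfolding B_def by simp
  qed
  have lp: "0 < lam n" by (rule lam_pos)
  have "\<bar>- (lam n)\<^sup>2 * u n - lam n * w n\<bar> \<le> (lam n)\<^sup>2 * \<bar>u n\<bar> + lam n * \<bar>w n\<bar>"
    using lp by (simp add: abs_mult) (rule abs_triangle_ineq4[THEN order_trans], simp add: abs_mult)
  also have "\<dots> \<le> (lam n)\<^sup>2 * B + lam n * B"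
    using un wn lp by (intro add_mono mult_left_mono) auto
  also have "\<dots> = ((lam n)\<^sup>2 + lam n) * B" by (simp add: algebra_simps)
  finally show ?thesis unfolding B_def .
qed

end

lemma sol_good:
  assumes sol: "solution lam l S T v"
  obtains Z where "negligible Z" "\<And>r. r \<in> {S..T} \<Longrightarrow> r \<notin> Z \<Longrightarrow> in_H lam 1 (v r)"
proof -
  have "AE t in lebesgue. t \<in> {S..T} \<longrightarrow> in_H lam 1 (v t)" using sol by (simp add: solution_def)
  then obtain N where "negligible N" "{x. \<not> (x \<in> {S..T} \<longrightarrow> in_H lam 1 (v x))} \<subseteq> N"
    unfolding eventually_ae_filter_negligible by blast
  then show ?thesis using that by blast
qed

lemma negligible_sets_lebesgue: "negligible Z \<Longrightarrow> Z \<in> sets lebesgue"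
  by (simp add: negligible_iff_null_sets null_setsD2)

context
  fixes lam :: "nat \<Rightarrow> real" and l and L
  assumes ev: "eigenvalues lam" and bo: "bounded_op_family lam l L"
begin

lemma lop: "in_H lam 0 u \<Longrightarrow> in_H lam 0 (l t u) \<and> Hnorm lam 0 (l t u) \<le> L * Hnorm lam 0 u"
  using bo by (simp add: bounded_op_family_def)

lemma series_integral:
  assumes sol: "solution lam l 0 T v" and c: "\<And>n. \<bar>c n\<bar> \<le> 1" and t: "t \<in> {0..T}"
  shows "((\<lambda>r. \<Sum>n. c n * (-2 * lam n * (v r n)\<^sup>2 - 2 * v r n * l r (v r) n))
            has_integral (Qf lam c (v t) - Qf lam c (v 0))) {0..t}"
proof -
  obtain Z where Z: "negligible Z" and good: "\<And>r. r \<in> {0..T} \<Longrightarrow> r \<notin> Z \<Longrightarrow> in_H lam 1 (v r)"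
    using sol_good[OF sol] by blast
  have T0: "0 \<le> T" using sol by (simp add: solution_def)
  have inHm: "\<And>t. t \<in> {0..T} \<Longrightarrow> in_H lam (-1) (v t)" using sol by (simp add: solution_def)
  have h1i: "(\<lambda>t. (Hnorm lam 1 (v t))\<^sup>2) integrable_on {0..T}" using sol by (simp add: solution_def)
  define f where "f n r = - (lam n)\<^sup>2 * v r n - lam n * l r (v r) n" for n r
  have eqn: "\<And>n t. t \<in> {0..T} \<Longrightarrow> (f n has_integral (v t n - v 0 n)) {0..t}"
    using sol unfolding solution_def f_def by blast
  define S' where "S' = {0..T} - Z"
  have S'leb: "S' \<in> sets lebesgue" unfolding S'_def
    by (rule sets.Diff[OF _ negligible_sets_lebesgue[OF Z]]) simp
  have toS': "h integrable_on S'" if "h integrable_on {0..T}" for h :: "real \<Rightarrow> real"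
    by (rule integrable_spike_set[OF that]; rule negligible_subset[OF Z]; auto simp: S'_def)
  define K1 where "K1 = (1 + L\<^sup>2) / lam 0"
  have fabs: "f n absolutely_integrable_on {0..T}" for n
  proof -
    have fi: "f n integrable_on {0..T}" using eqn[of T n] T0 by auto
    have "f n absolutely_integrable_on S'"
    proof (rule measurable_bounded_by_integrable_imp_absolutely_integrable)
      show "f n \<in> borel_measurable (lebesgue_on S')" by (rule integrable_imp_measurable[OF toS'[OF fi]])
      show "S' \<in> sets lebesgue" by (rule S'leb)
      show "(\<lambda>r. ((lam n)\<^sup>2 + lam n) * (1 + K1 * (Hnorm lam 1 (v r))\<^sup>2)) integrable_on S'"
        by (intro toS' integrable_on_mult_right integrable_add integrable_on_const h1i) auto
      fix r assume r: "r \<in> S'"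
      then have u: "in_H lam 1 (v r)" using good by (auto simp: S'_def)
      have w: "in_H lam 0 (l r (v r))" "Hnorm lam 0 (l r (v r)) \<le> L * Hnorm lam 0 (v r)"
        using lop[OF inH1_imp_inH0[OF ev u]] by auto
      show "norm (f n r) \<le> ((lam n)\<^sup>2 + lam n) * (1 + K1 * (Hnorm lam 1 (v r))\<^sup>2)"
        using f_bound[OF ev u w, of n] by (simp add: f_def K1_def)
    qed
    moreover have "negligible {x \<in> S' - {0..T}. f n x \<noteq> 0}"
      by (rule negligible_subset[OF Z]) (auto simp: S'_def)
    moreover have "negligible {x \<in> {0..T} - S'. f n x \<noteq> 0}"
      by (rule negligible_subset[OF Z]) (auto simp: S'_def)
    ultimately show ?thesis by (rule absolutely_integrable_spike_set)
  qed
  define \<phi> where "\<phi> n r = c n * (-2 * lam n * (v r n)\<^sup>2 - 2 * v r n * l r (v r) n)" for n r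
  have phin: "(\<phi> n has_integral (c n / lam n * ((v t n)\<^sup>2 - (v 0 n)\<^sup>2))) {0..t}" for n
  proof -
    have "((\<lambda>r. 2 * v r n * f n r) has_integral ((v t n)\<^sup>2 - (v 0 n)\<^sup>2)) {0..t}"
      by (rule sq_has_integral[OF fabs eqn t])
    then have "((\<lambda>r. c n / lam n * (2 * v r n * f n r)) has_integral (c n / lam n * ((v t n)\<^sup>2 - (v 0 n)\<^sup>2))) {0..t}"
      by (rule has_integral_mult_right)
    moreover have "(\<lambda>r. c n / lam n * (2 * v r n * f n r)) = \<phi> n"
      using lam_pos[OF ev, of n] by (auto simp: fun_eq_iff \<phi>_def f_def field_simps power2_eq_square)
    ultimately show ?thesis by simp
  qed
  define \<Phi> where "\<Phi> K r = (if r \<in> Z then 0 else \<Sum>n<K. \<phi> n r)" for K r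
  define y where "y K = (\<Sum>n<K. c n / lam n * ((v t n)\<^sup>2 - (v 0 n)\<^sup>2))" for K
  define gZ where "gZ r = (if r \<in> Z then 0 else \<Sum>n. \<phi> n r)" for r
  define K0 where "K0 = 2 + (1 + L\<^sup>2) / lam 0"
  have K0: "0 \<le> K0" using lam0[OF ev] by (simp add: K0_def)
  have tT: "0 \<le> t" "t \<le> T" using t by auto
  have "(gZ has_integral (Qf lam c (v t) - Qf lam c (v 0))) {0..t}"
  proof (rule has_integral_dominated_convergence)
    show "(\<Phi> K has_integral y K) {0..t}" for K
    proof -
      have "((\<lambda>r. \<Sum>n<K. \<phi> n r) has_integral y K) {0..t}"
        unfolding y_def by (intro has_integral_sum phin) auto
      then show ?thesis
        by (intro has_integral_spike[OF Z _ \<open>((\<lambda>r. \<Sum>n<K. \<phi> n r) has_integral y K) {0..t}\<close>]) (auto simp: \<Phi>_def)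
    qed
    show "(\<lambda>r. K0 * (Hnorm lam 1 (v r))\<^sup>2) integrable_on {0..t}"
      by (intro integrable_on_mult_right integrable_on_subinterval[OF h1i]) (use tT in auto)
    show "\<forall>r\<in>{0..t}. norm (\<Phi> K r) \<le> K0 * (Hnorm lam 1 (v r))\<^sup>2" for K
    proof
      fix r assume r: "r \<in> {0..t}"
      show "norm (\<Phi> K r) \<le> K0 * (Hnorm lam 1 (v r))\<^sup>2"
      proof (cases "r \<in> Z")
        case True then show ?thesis using K0 by (simp add: \<Phi>_def)
      next
        case False
        then have u: "in_H lam 1 (v r)" using good r tT by auto
        have w: "in_H lam 0 (l r (v r))" "Hnorm lam 0 (l r (v r)) \<le> L * Hnorm lam 0 (v r)"
          using lop[OF inH1_imp_inH0[OF ev u]] by auto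
        show ?thesis using phi_bounds(2)[OF ev u w(1) w(2) c] False
          by (simp add: \<Phi>_def \<phi>_def K0_def)
      qed
    qed
    show "\<forall>r\<in>{0..t}. (\<lambda>K. \<Phi> K r) \<longlonglongrightarrow> gZ r"
    proof
      fix r assume r: "r \<in> {0..t}"
      show "(\<lambda>K. \<Phi> K r) \<longlonglongrightarrow> gZ r"
      proof (cases "r \<in> Z")
        case True then show ?thesis by (simp add: \<Phi>_def gZ_def)
      next
        case False
        then have u: "in_H lam 1 (v r)" using good r tT by auto
        have w: "in_H lam 0 (l r (v r))" "Hnorm lam 0 (l r (v r)) \<le> L * Hnorm lam 0 (v r)"
          using lop[OF inH1_imp_inH0[OF ev u]] by auto
        have "summable (\<lambda>n. \<phi> n r)"
          using phi_bounds(1)[OF ev u w(1) w(2) c] by (simp add: \<phi>_def)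
        then show ?thesis using False by (simp add: \<Phi>_def gZ_def summable_LIMSEQ)
      qed
    qed
    show "y \<longlonglongrightarrow> Qf lam c (v t) - Qf lam c (v 0)"
    proof -
      have sm: "summable (\<lambda>n. c n * lam n powr (-1) * (v s n)\<^sup>2)" if "s \<in> {0..T}" for s
      proof (rule summable_comparison_test'[where N=0, OF inHm1_summable[OF ev inHm[OF that]]])
        fix n
        have "\<bar>c n\<bar> * ((v s n)\<^sup>2 / lam n) \<le> 1 * ((v s n)\<^sup>2 / lam n)"
          using c[of n] lam_pos[OF ev, of n] by (intro mult_right_mono) auto
        then show "norm (c n * lam n powr (-1) * (v s n)\<^sup>2) \<le> (v s n)\<^sup>2 / lam n"
          using lam_pos[OF ev, of n] powr_simps[OF ev] by (simp add: abs_mult)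
      qed
      have "(\<lambda>n. c n * lam n powr (-1) * (v t n)\<^sup>2 - c n * lam n powr (-1) * (v 0 n)\<^sup>2)
              sums (Qf lam c (v t) - Qf lam c (v 0))"
        unfolding Qf_def by (intro sums_diff summable_sums sm) (use tT in auto)
      moreover have "(\<lambda>n. c n * lam n powr (-1) * (v t n)\<^sup>2 - c n * lam n powr (-1) * (v 0 n)\<^sup>2)
          = (\<lambda>n. c n / lam n * ((v t n)\<^sup>2 - (v 0 n)\<^sup>2))"
        using powr_simps[OF ev] by (auto simp: fun_eq_iff algebra_simps)
      ultimately have "(\<lambda>n. c n / lam n * ((v t n)\<^sup>2 - (v 0 n)\<^sup>2)) sums (Qf lam c (v t) - Qf lam c (v 0))"
        by (simp only:)
      then show ?thesis unfolding y_def sums_def .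
    qed
  qed
  then show ?thesis
    by (intro has_integral_spike[OF Z _ \<open>(gZ has_integral (Qf lam c (v t) - Qf lam c (v 0))) {0..t}\<close>]) (auto simp: gZ_def \<phi>_def)
qed

end

lemma int_sub:
  fixes g F :: "real \<Rightarrow> real"
  assumes I: "\<And>t. t \<in> {a..b} \<Longrightarrow> (g has_integral (F t - F a)) {a..t}"
    and st: "a \<le> s" "s \<le> t" "t \<le> b"
  shows "(g has_integral (F t - F s)) {s..t}"
proof -
  have gt: "g integrable_on {a..t}" using I[of t] st by auto
  have c: "integral {a..s} g + integral {s..t} g = integral {a..t} g"
    using Henstock_Kurzweil_Integration.integral_combine[where a=a and c=s and b=t and f=g] gt st by auto
  have "integral {a..t} g = F t - F a" using I[of t] st by (simp add: integral_unique)
  moreover have "integral {a..s} g = F s - F a" using I[of s] st by (simp add: integral_unique)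
  ultimately have "integral {s..t} g = F t - F s" using c by simp
  moreover have "g integrable_on {s..t}" using integrable_on_subinterval[OF gt, of s t] st by auto
  ultimately show ?thesis using integrable_integral by fastforce
qed

lemma int_le_ae:
  fixes f g :: "real \<Rightarrow> real"
  assumes f: "(f has_integral I) S" and g: "(g has_integral J) S" and Z: "negligible Z"
    and le: "\<And>x. x \<in> S \<Longrightarrow> x \<notin> Z \<Longrightarrow> f x \<le> g x"
  shows "I \<le> J"
proof -
  define f' where "f' x = (if x \<in> Z then 0 else f x)" for x
  define g' where "g' x = (if x \<in> Z then 0 else g x)" for x
  have "(f' has_integral I) S" by (rule has_integral_spike[OF Z _ f]) (simp add: f'_def)
  moreover have "(g' has_integral J) S" by (rule has_integral_spike[OF Z _ g]) (simp add: g'_def)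
  ultimately show ?thesis
    by (rule has_integral_le) (use le in \<open>auto simp: f'_def g'_def\<close>)
qed

lemma cont_of_int:
  fixes g F :: "real \<Rightarrow> real"
  assumes I: "\<And>t. t \<in> {a..b} \<Longrightarrow> (g has_integral (F t - F a)) {a..t}" and ab: "a \<le> b"
  shows "continuous_on {a..b} F"
proof -
  have gi: "g integrable_on {a..b}" using I[of b] ab by auto
  have "continuous_on {a..b} (\<lambda>t. F a + integral {a..t} g)"
    by (intro continuous_intros indefinite_integral_continuous_1 gi)
  moreover have "F a + integral {a..t} g = F t" if "t \<in> {a..b}" for t
    using integral_unique[OF I[OF that]] by simp
  ultimately show ?thesis by (metis (no_types, lifting) continuous_on_cong)
qed

lemma E_le_H0:
  assumes ev: "eigenvalues lam" and u: "in_H lam 0 u"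
  shows "lam 0 * Qf lam (\<lambda>_. 1) u \<le> (Hnorm lam 0 u)\<^sup>2"
proof -
  have s0: "summable (\<lambda>n. (u n)\<^sup>2)" using inH0_summable[OF ev u] .
  have le: "(u n)\<^sup>2 / lam n \<le> (u n)\<^sup>2 / lam 0" for n
    using lam_pos[OF ev, of n] lam_ge[OF ev, of n] lam0[OF ev] by (intro divide_left_mono) auto
  have sm: "summable (\<lambda>n. (u n)\<^sup>2 / lam n)"
    by (rule summable_comparison_test'[where N=0, OF summable_divide[OF s0, of "lam 0"]])
       (use le lam_pos[OF ev] in \<open>simp add: abs_of_pos\<close>)
  have "Qf lam (\<lambda>_. 1) u = (\<Sum>n. (u n)\<^sup>2 / lam n)"
    unfolding Qf_def using powr_simps[OF ev] by simp
  also have "\<dots> \<le> (\<Sum>n. (u n)\<^sup>2 / lam 0)" by (rule suminf_le[OF le sm summable_divide[OF s0]])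
  also have "\<dots> = (\<Sum>n. (u n)\<^sup>2) / lam 0" by (rule suminf_divide[OF s0])
  finally have "lam 0 * Qf lam (\<lambda>_. 1) u \<le> (\<Sum>n. (u n)\<^sup>2)"
    using lam0[OF ev] by (simp add: field_simps)
  then show ?thesis using Hnorm_sq[OF ev u] powr_simps[OF ev] by simp
qed

lemma V_le_E:
  assumes ev: "eigenvalues lam" and u: "in_H lam (-1) u"
  shows "Vfun lam N u \<le> Qf lam (\<lambda>_. 1) u"
proof -
  have sm: "summable (\<lambda>n. (u n)\<^sup>2 / lam n)" using inHm1_summable[OF ev u] .
  have sm2: "summable (\<lambda>n. (if n < N then -1 else 1) * ((u n)\<^sup>2 / lam n))"
    by (rule summable_comparison_test'[where N=0, OF sm]) (simp add: lam_pos[OF ev, THEN less_imp_le])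
  have "Vfun lam N u = (\<Sum>n. (if n < N then -1 else 1) * ((u n)\<^sup>2 / lam n))"
    unfolding Vfun_def using powr_simps[OF ev] by (simp add: mult.assoc)
  also have "\<dots> \<le> (\<Sum>n. (u n)\<^sup>2 / lam n)"
    by (rule suminf_le[OF _ sm2 sm]) (auto simp: lam_pos[OF ev, THEN less_imp_le])
  also have "\<dots> = Qf lam (\<lambda>_. 1) u" unfolding Qf_def using powr_simps[OF ev] by simp
  finally show ?thesis .
qed

definition cV :: "nat \<Rightarrow> nat \<Rightarrow> real" where "cV N n = (if n < N then -1 else 1)"

definition gfun where
  "gfun lam l c v r = (\<Sum>n. c n * (-2 * lam n * (v r n)\<^sup>2 - 2 * v r n * l r (v r) n))"

lemma VQ: "Vfun lam N u = Qf lam (cV N) u" by (simp add: Vfun_def Qf_def cV_def)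

lemma HE: "Hnorm lam (-1) u = sqrt (Qf lam (\<lambda>_. 1) u)" by (simp add: Hnorm_def Qf_def)

context
  fixes lam :: "nat \<Rightarrow> real" and l L and N :: nat and \<mu> \<alpha> am T v
  assumes ev: "eigenvalues lam" and bo: "bounded_op_family lam l L"
    and mu: "0 < \<mu>" and am: "0 < am" and al: "\<And>t. am \<le> \<alpha> t"
    and sol: "solution lam l 0 T v"
    and cone: "AE t in lebesgue. t \<in> {0..T} \<longrightarrow>
             (\<exists>D. ((\<lambda>s. Vfun lam N (v s)) has_real_derivative D) (at t within {0..T}) \<and>
                  D + \<alpha> t * Vfun lam N (v t) \<le> - \<mu> * (Hnorm lam 0 (v t))\<^sup>2)"
begin

abbreviation "W t \<equiv> Vfun lam N (v t)"
abbreviation "E t \<equiv> Qf lam (\<lambda>_. 1) (v t)"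
abbreviation "gW \<equiv> gfun lam l (cV N) v"
abbreviation "gE \<equiv> gfun lam l (\<lambda>_. 1) v"

lemma T0: "0 \<le> T" using sol by (simp add: solution_def)

lemma inHm: "t \<in> {0..T} \<Longrightarrow> in_H lam (-1) (v t)" using sol by (simp add: solution_def)

lemma W_int: "t \<in> {0..T} \<Longrightarrow> (gW has_integral (W t - W 0)) {0..t}"
  using series_integral[OF ev bo sol, of "cV N" t] unfolding VQ gfun_def by (simp add: cV_def)

lemma E_int: "t \<in> {0..T} \<Longrightarrow> (gE has_integral (E t - E 0)) {0..t}"
  using series_integral[OF ev bo sol, of "\<lambda>_. 1" t] unfolding gfun_def by simp

lemma W_cont: "continuous_on {0..T} W"
  by (rule cont_of_int[OF W_int T0])

lemma E_cont: "continuous_on {0..T} E"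
  by (rule cont_of_int[OF E_int T0])

lemma goodset:
  obtains Z where "negligible Z"
    "\<And>x. x \<in> {0..T} \<Longrightarrow> x \<notin> Z \<Longrightarrow> in_H lam 1 (v x) \<and> gW x + \<alpha> x * W x \<le> - \<mu> * (Hnorm lam 0 (v x))\<^sup>2"
proof -
  have gi: "gW integrable_on {0..T}" using W_int[of T] T0 by auto
  obtain Z1 where Z1: "negligible Z1"
    and d1: "\<And>x D. x \<in> {0<..<T} \<Longrightarrow> x \<notin> Z1 \<Longrightarrow> (W has_real_derivative D) (at x within {0..T}) \<Longrightarrow> D = gW x"
    using deriv_ae_eq[OF gi W_int] by blast
  obtain Z2 where Z2: "negligible Z2" and d2: "{x. \<not> (x \<in> {0..T} \<longrightarrow>
             (\<exists>D. (W has_real_derivative D) (at x within {0..T}) \<and>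
                  D + \<alpha> x * W x \<le> - \<mu> * (Hnorm lam 0 (v x))\<^sup>2))} \<subseteq> Z2"
    using cone unfolding eventually_ae_filter_negligible by blast
  obtain Z3 where Z3: "negligible Z3" and d3: "\<And>r. r \<in> {0..T} \<Longrightarrow> r \<notin> Z3 \<Longrightarrow> in_H lam 1 (v r)"
    using sol_good[OF sol] by blast
  show ?thesis
  proof (rule that[of "Z1 \<union> Z2 \<union> Z3 \<union> {0, T}"])
    show "negligible (Z1 \<union> Z2 \<union> Z3 \<union> {0, T})" using Z1 Z2 Z3 by auto
    fix x assume x: "x \<in> {0..T}" "x \<notin> Z1 \<union> Z2 \<union> Z3 \<union> {0, T}"
    then have xo: "x \<in> {0<..<T}" by auto
    from x d2 obtain D where D: "(W has_real_derivative D) (at x within {0..T})"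
      "D + \<alpha> x * W x \<le> - \<mu> * (Hnorm lam 0 (v x))\<^sup>2" by blast
    have "D = gW x" using d1[OF xo _ D(1)] x by auto
    then show "in_H lam 1 (v x) \<and> gW x + \<alpha> x * W x \<le> - \<mu> * (Hnorm lam 0 (v x))\<^sup>2"
      using D(2) d3[of x] x by auto
  qed
qed

lemma W_sub: "0 \<le> s \<Longrightarrow> s \<le> t \<Longrightarrow> t \<le> T \<Longrightarrow> (gW has_integral (W t - W s)) {s..t}"
  by (rule int_sub[OF W_int]) auto

lemma E_sub: "0 \<le> s \<Longrightarrow> s \<le> t \<Longrightarrow> t \<le> T \<Longrightarrow> (gE has_integral (E t - E s)) {s..t}"
  by (rule int_sub[OF E_int]) auto

lemma P1:
  assumes st: "0 \<le> s" "s \<le> t" "t \<le> T" and Ws: "W s \<le> 0"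
  shows "W t \<le> 0"
proof (rule ccontr)
  assume Wt: "\<not> W t \<le> 0"
  obtain Z where Z: "negligible Z" and gd: "\<And>x. x \<in> {0..T} \<Longrightarrow> x \<notin> Z \<Longrightarrow> in_H lam 1 (v x) \<and> gW x + \<alpha> x * W x \<le> - \<mu> * (Hnorm lam 0 (v x))\<^sup>2"
    using goodset by blast
  define A where "A = {r \<in> {s..t}. W r \<le> 0}"
  have contst: "continuous_on {s..t} W" by (rule continuous_on_subset[OF W_cont]) (use st in auto)
  have clA: "closed A" unfolding A_def
    by (rule continuous_on_closed_Collect_le[OF contst continuous_on_const]) simp
  have sA: "s \<in> A" using st Ws by (simp add: A_def)
  have bA: "bdd_above A" unfolding A_def by (rule bdd_aboveI[of _ t]) auto
  define \<sigma> where "\<sigma> = Sup A"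
  have sigA: "\<sigma> \<in> A" unfolding \<sigma>_def using closed_contains_Sup[OF _ bA clA] sA by blast
  then have sig: "s \<le> \<sigma>" "\<sigma> \<le> t" "W \<sigma> \<le> 0" by (auto simp: A_def)
  have pos: "W r > 0" if "\<sigma> < r" "r \<le> t" for r
  proof (rule ccontr)
    assume "\<not> W r > 0"
    then have "r \<in> A" using that sig by (auto simp: A_def)
    then have "r \<le> \<sigma>" unfolding \<sigma>_def using bA by (rule cSup_upper)
    then show False using that by simp
  qed
  have nZ: "negligible (Z \<union> {\<sigma>})" using Z by simp
  have "W t - W \<sigma> \<le> 0"
  proof (rule int_le_ae[OF W_sub[of \<sigma> t] _ nZ, where g="\<lambda>_. 0"])
    show "0 \<le> \<sigma>" "\<sigma> \<le> t" "t \<le> T" using sig st by auto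
    show "((\<lambda>_. 0) has_integral (0::real)) {\<sigma>..t}" by simp
    fix x assume x: "x \<in> {\<sigma>..t}" "x \<notin> Z \<union> {\<sigma>}"
    then have x0: "x \<in> {0..T}" "x \<notin> Z" "\<sigma> < x" using sig st by auto
    have g: "gW x + \<alpha> x * W x \<le> - \<mu> * (Hnorm lam 0 (v x))\<^sup>2" using gd[OF x0(1,2)] by blast
    have "0 < \<alpha> x * W x" using pos[of x] x x0 al[of x] am by (intro mult_pos_pos) auto
    moreover have "0 \<le> \<mu> * (Hnorm lam 0 (v x))\<^sup>2" using mu by simp
    ultimately show "gW x \<le> 0" using g by linarith
  qed
  then show False using Wt sig by simp
qed


lemma const_int: fixes s t c :: real shows "s \<le> t \<Longrightarrow> ((\<lambda>_. c) has_integral ((t - s) * c)) {s..t}"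
  using has_integral_const_real[of c s t] by (simp add: content_real)

context
  assumes WT: "0 < W T"
begin

lemma Wpos: "t \<in> {0..T} \<Longrightarrow> 0 < W t"
  using P1[of t T] T0 WT by force

abbreviation "K \<equiv> (1 + L\<^sup>2) / \<mu>"

lemma K0: "0 \<le> K" using mu by simp

lemma pt:
  assumes x: "x \<in> {0..T}" and g: "in_H lam 1 (v x) \<and> gW x + \<alpha> x * W x \<le> - \<mu> * (Hnorm lam 0 (v x))\<^sup>2"
  shows "gW x \<le> - am * W x" "gW x \<le> - (\<mu> * lam 0) * E x" "gE x \<le> K * (- gW x)"
proof -
  have u: "in_H lam 1 (v x)" using g by blast
  have u0: "in_H lam 0 (v x)" by (rule inH1_imp_inH0[OF ev u])
  have gg: "gW x + \<alpha> x * W x \<le> - \<mu> * (Hnorm lam 0 (v x))\<^sup>2" using g by blast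
  have Wx: "0 < W x" using Wpos[OF x] .
  have aW: "am * W x \<le> \<alpha> x * W x" using al[of x] Wx by (intro mult_right_mono) auto
  have H0: "0 \<le> \<mu> * (Hnorm lam 0 (v x))\<^sup>2" using mu by simp
  show "gW x \<le> - am * W x" using gg aW H0 by linarith
  have "\<mu> * (lam 0 * E x) \<le> \<mu> * (Hnorm lam 0 (v x))\<^sup>2"
    using E_le_H0[OF ev u0] mu by (intro mult_left_mono) auto
  moreover have "0 \<le> \<alpha> x * W x"
  proof -
    have "0 < am * W x" using am Wx by simp
    then show ?thesis using aW by linarith
  qed
  ultimately show "gW x \<le> - (\<mu> * lam 0) * E x" using gg by (simp add: algebra_simps)
  have w: "in_H lam 0 (l x (v x))" "Hnorm lam 0 (l x (v x)) \<le> L * Hnorm lam 0 (v x)"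
    using bo u0 by (auto simp: bounded_op_family_def)
  have gE: "gE x \<le> (1 + L\<^sup>2) * (Hnorm lam 0 (v x))\<^sup>2"
    using phi_bounds(3)[OF ev u w(1) w(2), of "\<lambda>_. 1"] by (simp add: gfun_def)
  have "\<mu> * (Hnorm lam 0 (v x))\<^sup>2 \<le> - gW x"
    using gg \<open>0 \<le> \<alpha> x * W x\<close> by linarith
  then have "(Hnorm lam 0 (v x))\<^sup>2 \<le> - gW x / \<mu>" using mu by (simp add: field_simps)
  then have "(1 + L\<^sup>2) * (Hnorm lam 0 (v x))\<^sup>2 \<le> (1 + L\<^sup>2) * (- gW x / \<mu>)"
    by (intro mult_left_mono) auto
  then show "gE x \<le> K * (- gW x)" using gE by simp
qed

lemma Wcont_sub: "0 \<le> s \<Longrightarrow> t \<le> T \<Longrightarrow> continuous_on {s..t} W"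
  by (rule continuous_on_subset[OF W_cont]) auto

lemma Econt_sub: "0 \<le> s \<Longrightarrow> t \<le> T \<Longrightarrow> continuous_on {s..t} E"
  by (rule continuous_on_subset[OF E_cont]) auto

lemma Wdec:
  assumes st: "0 \<le> s" "s \<le> t" "t \<le> T"
  shows "W t * (1 + am * (t - s)) \<le> W s"
proof -
  obtain Z where Z: "negligible Z" and gd: "\<And>x. x \<in> {0..T} \<Longrightarrow> x \<notin> Z \<Longrightarrow> in_H lam 1 (v x) \<and> gW x + \<alpha> x * W x \<le> - \<mu> * (Hnorm lam 0 (v x))\<^sup>2"
    using goodset by blast
  have Wi: "W integrable_on {s..t}" by (rule integrable_continuous_real[OF Wcont_sub]) (use st in auto)
  have "W t - W s \<le> - am * integral {s..t} W"
  proof (rule int_le_ae[OF W_sub[OF st] _ Z])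
    show "((\<lambda>r. - am * W r) has_integral (- am * integral {s..t} W)) {s..t}"
      by (rule has_integral_mult_right[OF integrable_integral[OF Wi]])
    fix x assume "x \<in> {s..t}" "x \<notin> Z"
    then show "gW x \<le> - am * W x" using pt(1)[of x] gd[of x] st by auto
  qed
  moreover have "(t - s) * W t \<le> integral {s..t} W"
  proof (rule has_integral_le[OF const_int[OF st(2)] integrable_integral[OF Wi]])
    fix x assume x: "x \<in> {s..t}"
    show "W t \<le> W x"
    proof (rule ccontr)
      assume "\<not> W t \<le> W x"
      have "W t - W x \<le> 0"
      proof (rule int_le_ae[OF W_sub _ Z, where g="\<lambda>_. 0"])
        show "0 \<le> x" "x \<le> t" "t \<le> T" using x st by auto
        show "((\<lambda>_. 0) has_integral (0::real)) {x..t}" by simp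
        fix y assume "y \<in> {x..t}" "y \<notin> Z"
        then have y: "y \<in> {0..T}" "y \<notin> Z" using x st by auto
        have "0 < am * W y" using am Wpos[OF y(1)] by simp
        then show "gW y \<le> 0" using pt(1)[OF y(1) gd[OF y]] by linarith
      qed
      then show False using \<open>\<not> W t \<le> W x\<close> by simp
    qed
  qed
  moreover have "am * ((t - s) * W t) \<le> am * integral {s..t} W"
    using \<open>(t - s) * W t \<le> integral {s..t} W\<close> am by (intro mult_left_mono) auto
  ultimately have "W t - W s \<le> - am * ((t - s) * W t)"
    by linarith
  then show ?thesis by (simp add: algebra_simps)
qed

lemma Wmono: "0 \<le> s \<Longrightarrow> s \<le> t \<Longrightarrow> t \<le> T \<Longrightarrow> W t \<le> W s"
proof -
  assume st: "0 \<le> s" "s \<le> t" "t \<le> T"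
  have "0 \<le> W t * (am * (t - s))" using Wpos[of t] am st by simp
  moreover have "W t * (1 + am * (t - s)) = W t + W t * (am * (t - s))" by (simp add: algebra_simps)
  ultimately show ?thesis using Wdec[OF st] by linarith
qed

lemma Wgeom: "0 \<le> s \<Longrightarrow> s \<le> t \<Longrightarrow> t \<le> T \<Longrightarrow> real k \<le> t - s \<Longrightarrow> W t * (1 + am) ^ k \<le> W s"
proof (induction k arbitrary: s)
  case 0 then show ?case using Wmono by simp
next
  case (Suc k)
  have s1: "0 \<le> s + 1" "s + 1 \<le> t" "real k \<le> t - (s + 1)" using Suc.prems by auto
  have "W t * (1 + am) ^ k \<le> W (s + 1)" using Suc.IH[OF s1(1,2) Suc.prems(3) s1(3)] .
  moreover have "W (s + 1) * (1 + am) \<le> W s" using Wdec[of s "s+1"] Suc.prems s1 by simp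
  moreover have "W t * (1 + am) ^ k * (1 + am) \<le> W (s + 1) * (1 + am)"
    using \<open>W t * (1 + am) ^ k \<le> W (s + 1)\<close> am by (intro mult_right_mono) auto
  ultimately have "W t * (1 + am) ^ k * (1 + am) \<le> W s" by linarith
  then show ?case by (simp add: algebra_simps)
qed

lemma Eupd:
  assumes st: "0 \<le> s" "s \<le> t" "t \<le> T"
  shows "E t \<le> E s + K * W s"
proof -
  obtain Z where Z: "negligible Z" and gd: "\<And>x. x \<in> {0..T} \<Longrightarrow> x \<notin> Z \<Longrightarrow> in_H lam 1 (v x) \<and> gW x + \<alpha> x * W x \<le> - \<mu> * (Hnorm lam 0 (v x))\<^sup>2"
    using goodset by blast
  have "E t - E s \<le> K * (- (W t - W s))"
  proof (rule int_le_ae[OF E_sub[OF st] _ Z])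
    show "((\<lambda>r. K * (- gW r)) has_integral (K * (- (W t - W s)))) {s..t}"
      by (intro has_integral_mult_right has_integral_neg W_sub[OF st])
    fix x assume "x \<in> {s..t}" "x \<notin> Z"
    then show "gE x \<le> K * (- gW x)" using pt(3)[of x] gd[of x] st by auto
  qed
  moreover have "0 \<le> K * W t" by (rule mult_nonneg_nonneg[OF K0]) (use Wpos[of t] st in auto)
  ultimately show ?thesis by (simp add: algebra_simps)
qed

lemma Eint:
  assumes st: "0 \<le> s" "s \<le> t" "t \<le> T"
  shows "\<mu> * lam 0 * integral {s..t} E \<le> W s"
proof -
  obtain Z where Z: "negligible Z" and gd: "\<And>x. x \<in> {0..T} \<Longrightarrow> x \<notin> Z \<Longrightarrow> in_H lam 1 (v x) \<and> gW x + \<alpha> x * W x \<le> - \<mu> * (Hnorm lam 0 (v x))\<^sup>2"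
    using goodset by blast
  have Ei: "E integrable_on {s..t}" by (rule integrable_continuous_real[OF Econt_sub]) (use st in auto)
  have "W t - W s \<le> - (\<mu> * lam 0) * integral {s..t} E"
  proof (rule int_le_ae[OF W_sub[OF st] _ Z])
    show "((\<lambda>r. - (\<mu> * lam 0) * E r) has_integral (- (\<mu> * lam 0) * integral {s..t} E)) {s..t}"
      by (rule has_integral_mult_right[OF integrable_integral[OF Ei]])
    fix x assume "x \<in> {s..t}" "x \<notin> Z"
    then show "gW x \<le> - (\<mu> * lam 0) * E x" using pt(2)[of x] gd[of x] st by auto
  qed
  then show ?thesis using Wpos[of t] st by simp
qed

lemma Ebound1:
  assumes t: "1 \<le> t" "t \<le> T"
  shows "E t \<le> (1 / (\<mu> * lam 0) + K) * W (t - 1)"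
proof -
  have ml: "0 < \<mu> * lam 0" using mu lam0[OF ev] by simp
  obtain s where s: "s \<in> {t-1..t}" and smin: "\<And>y. y \<in> {t-1..t} \<Longrightarrow> E s \<le> E y"
    using continuous_attains_inf[of "{t-1..t}" E] Econt_sub[of "t-1" t] t by auto
  have Ei: "E integrable_on {t-1..t}" by (rule integrable_continuous_real[OF Econt_sub]) (use t in auto)
  have "(t - (t-1)) * E s \<le> integral {t-1..t} E"
    by (rule has_integral_le[OF const_int integrable_integral[OF Ei]]) (use smin in auto)
  then have "E s \<le> integral {t-1..t} E" by simp
  also have "\<dots> \<le> W (t - 1) / (\<mu> * lam 0)"
    using Eint[of "t-1" t] t ml by (simp add: field_simps)
  finally have Es: "E s \<le> W (t - 1) / (\<mu> * lam 0)" .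
  have "E t \<le> E s + K * W s" using Eupd[of s t] s t by auto
  also have "\<dots> \<le> W (t - 1) / (\<mu> * lam 0) + K * W (t - 1)"
    using Es Wmono[of "t-1" s] s t K0 by (intro add_mono mult_left_mono) auto
  finally show ?thesis by (simp add: algebra_simps)
qed

lemma E0pos: "0 < E 0"
  using Wpos[of 0] V_le_E[OF ev inHm[of 0], of N] T0 by force

lemma Edecay:
  assumes t: "0 \<le> t" "t \<le> T"
  shows "E t \<le> ((1 / (\<mu> * lam 0) + 1 + 2 * K) * exp (2 * ln (1 + am))) * exp (- ln (1 + am) * t) * E 0"
proof -
  define g where "g = ln (1 + am)"
  have g0: "0 < g" using am by (simp add: g_def)
  define A where "A = 1 / (\<mu> * lam 0) + K"
  have A0: "0 \<le> A" using K0 mu lam0[OF ev] by (simp add: A_def)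
  have WE0: "W 0 \<le> E 0" using V_le_E[OF ev inHm[of 0], of N] T0 by simp
  show ?thesis
  proof (cases "t < 1")
    case True
    have "E t \<le> E 0 + K * W 0" using Eupd[of 0 t] t by simp
    also have "\<dots> \<le> (1 + K) * E 0"
    proof -
      have "K * W 0 \<le> K * E 0" by (rule mult_left_mono[OF WE0 K0])
      moreover have "(1 + K) * E 0 = E 0 + K * E 0" by (simp add: ring_distribs)
      ultimately show ?thesis by linarith
    qed
    also have "\<dots> \<le> ((1 / (\<mu> * lam 0) + 1 + 2 * K) * exp (2 * g)) * exp (- g * t) * E 0"
    proof (rule mult_right_mono[OF _ less_imp_le[OF E0pos]])
      have "1 \<le> exp (2 * g) * exp (- g * t)"
        using g0 True by (simp add: exp_add[symmetric] algebra_simps)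
      moreover have "1 + K \<le> 1 / (\<mu> * lam 0) + 1 + 2 * K"
      proof -
        have "0 \<le> 1 / (\<mu> * lam 0)" using mu lam0[OF ev] by simp
        then show ?thesis using K0 by linarith
      qed
      moreover have "0 \<le> 1 + K" using K0 by simp
      ultimately have "(1 + K) * 1 \<le> (1 / (\<mu> * lam 0) + 1 + 2 * K) * (exp (2 * g) * exp (- g * t))"
        by (intro mult_mono) auto
      then show "1 + K \<le> (1 / (\<mu> * lam 0) + 1 + 2 * K) * exp (2 * g) * exp (- g * t)"
        by (simp add: algebra_simps)
    qed
    finally show ?thesis by (simp add: g_def)
  next
    case False
    define k where "k = nat \<lfloor>t - 1\<rfloor>"
    have k1: "real k \<le> t - 1" "t - 2 < real k" using False by (auto simp: k_def) linarith+
    have "W (t - 1) * (1 + am) ^ k \<le> W 0" using Wgeom[of 0 "t-1" k] False t k1 by auto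
    moreover have pk: "(1 + am) ^ k = exp (real k * g)"
      using am by (simp add: g_def exp_of_nat_mult)
    ultimately have "W (t - 1) \<le> W 0 * exp (- (real k * g))"
      by (simp add: exp_minus field_simps)
    also have "\<dots> \<le> E 0 * exp (- (real k * g))" using WE0 by simp
    also have "\<dots> \<le> E 0 * (exp (2 * g) * exp (- g * t))"
    proof -
      have "g * (t - 2) \<le> g * real k" using k1 g0 by (intro mult_left_mono) auto
      then have "- (real k * g) \<le> 2 * g + - g * t" by (simp add: algebra_simps)
      then have "exp (- (real k * g)) \<le> exp (2 * g) * exp (- g * t)"
        by (simp add: exp_add[symmetric])
      then show ?thesis using E0pos by (intro mult_left_mono) auto
    qed
    finally have Wt1: "W (t - 1) \<le> E 0 * (exp (2 * g) * exp (- g * t))" .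
    have "E t \<le> A * W (t - 1)" using Ebound1[of t] False t by (simp add: A_def)
    also have "\<dots> \<le> A * (E 0 * (exp (2 * g) * exp (- g * t)))" using Wt1 A0 by (intro mult_left_mono)
    also have "\<dots> \<le> ((1 / (\<mu> * lam 0) + 1 + 2 * K) * exp (2 * g)) * exp (- g * t) * E 0"
    proof -
      have "A \<le> 1 / (\<mu> * lam 0) + 1 + 2 * K" using K0 unfolding A_def by linarith
      moreover have "0 \<le> E 0 * (exp (2 * g) * exp (- g * t))" using E0pos by simp
      ultimately have "A * (E 0 * (exp (2 * g) * exp (- g * t))) \<le> (1 / (\<mu> * lam 0) + 1 + 2 * K) * (E 0 * (exp (2 * g) * exp (- g * t)))"
        by (rule mult_right_mono)
      then show ?thesis by (simp add: algebra_simps)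
    qed
    finally show ?thesis by (simp add: g_def)
  qed
qed

end
end

theorem corollary3p3:
  fixes lam :: "nat \<Rightarrow> real" and N :: nat
    and l :: "real \<Rightarrow> (nat \<Rightarrow> real) \<Rightarrow> (nat \<Rightarrow> real)" and L :: real
  assumes "eigenvalues lam"
    and "bounded_op_family lam l L"
    and "strong_cone_condition lam N l"
  shows "\<exists>C>0. \<exists>\<gamma>>0. \<forall>T>0. \<forall>v. solution lam l 0 T v \<longrightarrow>
           ((v 0 \<in> Kplus lam N \<longrightarrow> (\<forall>t\<in>{0..T}. v t \<in> Kplus lam N)) \<and>
            (v T \<notin> Kplus lam N \<longrightarrow>
               (\<forall>t\<in>{0..T}. Hnorm lam (-1) (v t) \<le> C * exp (- \<gamma> * t) * Hnorm lam (-1) (v 0))))"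
proof -
  note ev = assms(1) and bo = assms(2)
  obtain \<mu> \<alpha> am ap where mu: "0 < \<mu>" and am: "0 < am" and al: "\<And>t. am \<le> \<alpha> t"
    and cone: "\<And>S T v. solution lam l S T v \<Longrightarrow>
          (AE t in lebesgue. t \<in> {S..T} \<longrightarrow>
             (\<exists>D. ((\<lambda>s. Vfun lam N (v s)) has_real_derivative D) (at t within {S..T}) \<and>
                  D + \<alpha> t * Vfun lam N (v t) \<le> - \<mu> * (Hnorm lam 0 (v t))\<^sup>2))"
    using assms(3) unfolding strong_cone_condition_def by blast
  define g where "g = ln (1 + am)"
  have g0: "0 < g" using am by (simp add: g_def)
  define B where "B = (1 / (\<mu> * lam 0) + 1 + 2 * ((1 + L\<^sup>2) / \<mu>)) * exp (2 * g)"
  have B0: "0 < B"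
  proof -
    have a: "0 \<le> 1 / (\<mu> * lam 0)" using mu lam0[OF ev] by simp
    have b: "0 \<le> (1 + L\<^sup>2) / \<mu>" using mu by simp
    have "0 < 1 / (\<mu> * lam 0) + 1 + 2 * ((1 + L\<^sup>2) / \<mu>)" using a b by linarith
    then show ?thesis unfolding B_def by simp
  qed
  have main: "\<forall>T>0. \<forall>v. solution lam l 0 T v \<longrightarrow>
           ((v 0 \<in> Kplus lam N \<longrightarrow> (\<forall>t\<in>{0..T}. v t \<in> Kplus lam N)) \<and>
            (v T \<notin> Kplus lam N \<longrightarrow>
               (\<forall>t\<in>{0..T}. Hnorm lam (-1) (v t) \<le> sqrt B * exp (- (g / 2) * t) * Hnorm lam (-1) (v 0))))"
  proof (intro allI impI conjI)
    fix T :: real and v assume T: "0 < T" and sol: "solution lam l 0 T v"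
    have cv: "AE t in lebesgue. t \<in> {0..T} \<longrightarrow>
             (\<exists>D. ((\<lambda>s. Vfun lam N (v s)) has_real_derivative D) (at t within {0..T}) \<and>
                  D + \<alpha> t * Vfun lam N (v t) \<le> - \<mu> * (Hnorm lam 0 (v t))\<^sup>2)"
      using cone[OF sol] .
    have inHm: "\<And>t. t \<in> {0..T} \<Longrightarrow> in_H lam (-1) (v t)" using sol by (simp add: solution_def)
    show "\<forall>t\<in>{0..T}. v t \<in> Kplus lam N" if "v 0 \<in> Kplus lam N"
    proof
      fix t assume t: "t \<in> {0..T}"
      have "Vfun lam N (v 0) \<le> 0" using that by (simp add: Kplus_def)
      then have "Vfun lam N (v t) \<le> 0" using P1[OF ev bo mu am al sol cv, of 0 t] t by auto
      then show "v t \<in> Kplus lam N" using inHm[OF t] by (simp add: Kplus_def)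
    qed
    show "\<forall>t\<in>{0..T}. Hnorm lam (-1) (v t) \<le> sqrt B * exp (- (g / 2) * t) * Hnorm lam (-1) (v 0)"
      if nK: "v T \<notin> Kplus lam N"
    proof
      fix t assume t: "t \<in> {0..T}"
      have WT: "0 < Vfun lam N (v T)" using nK inHm[of T] T by (auto simp: Kplus_def)
      have Et: "Qf lam (\<lambda>_. 1) (v t) \<le> B * exp (- g * t) * Qf lam (\<lambda>_. 1) (v 0)"
        using Edecay[OF ev bo mu am al sol cv WT, of t] t by (simp add: B_def g_def)
      have ex: "sqrt (exp (- g * t)) = exp (- (g / 2) * t)"
      proof (rule real_sqrt_unique)
        show "(exp (- (g / 2) * t))\<^sup>2 = exp (- g * t)"
          by (simp add: power2_eq_square exp_add[symmetric])
      qed simp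
      have "Hnorm lam (-1) (v t) = sqrt (Qf lam (\<lambda>_. 1) (v t))" by (rule HE)
      also have "\<dots> \<le> sqrt (B * exp (- g * t) * Qf lam (\<lambda>_. 1) (v 0))" using Et by simp
      also have "\<dots> = sqrt B * sqrt (exp (- g * t)) * sqrt (Qf lam (\<lambda>_. 1) (v 0))"
        by (simp only: real_sqrt_mult)
      also have "\<dots> = sqrt B * exp (- (g / 2) * t) * Hnorm lam (-1) (v 0)"
        by (simp only: ex HE[symmetric])
      finally show "Hnorm lam (-1) (v t) \<le> sqrt B * exp (- (g / 2) * t) * Hnorm lam (-1) (v 0)" .
    qed
  qed
  have "0 < sqrt B" using B0 by simp
  moreover have "0 < g / 2" using g0 by simp
  ultimately show ?thesis using main by blast
qed


end
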